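(* Let $\delta'\in(0,1)$ and $\rho=(\rho_c,\rho_u,\rho_w)\in(0,\infty)^3$. On the event $\mathcal E_{U,m}(\delta')$, for every $\varphi\in\Omega_\rho$, \[ \sup_{X\in\mathcal X}|f(X;\varphi)|\le L_{1,m}(\delta')\sqrt{\rho_u^2+\rho_w^2}+\sigma_0\rho_c. \] Moreover, for every $\bar\nu\in(0,\infty)^3$ and every $\tilde f(\cdot;v)$ with $v\in\mathcal V_{\bar\nu}$, \[ \sup_{X\in\mathcal X}|\tilde f(X;v)|\le\sigma_0\bar\nu_c+\sigma_1\bar\nu_u+\sigma_1\sqrt d\,\bar\nu_w. \]
   Context: $\mathcal{X}=\{X\in\mathbb{R}^{d\times T}:\max_t\|X_t\|_2\le1\}$; each $X$ has a fixed query $q_X\in\mathbb{R}^d$, $\|q_X\|_2\le1$. Softmax $(\sigma_s(z))_t=e^{z_t}/\sum_se^{z_s}$, $J_s(z)=\operatorname{diag}(\sigma_s(z))-\sigma_s(z)\sigma_s(z)^\top$; $a(X;W)=X\sigma_s(X^\top Wq_X)$, $M(X;W)=XJ_s(X^\top Wq_X)X^\top$; $h(X;\theta)=\sigma(U^\top a(X;W))$; $f(X;\varphi)=m^{-1/2}\sum_{i=1}^mc_ih(X;\theta_i)$, $\varphi_i=(c_i,U_i,\operatorname{vec}(W_i))$. $\sigma$ twice differentiable with $|\sigma|\le\sigma_0,|\sigma'|\le\sigma_1,|\sigma''|\le\sigma_2$. $m$ even; symmetric initialization $\varphi^{(0)}$: for $i\le m/2$, independently, $W_i^{(0)}$ with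 i.i.d. $\mathcal N(0,1)$ entries, $U_i^{(0)}\sim\mathcal N(0,I_d)$, $c_i^{(0)}$ uniform on $\{\pm1\}$; $W_{i+m/2}^{(0)}=W_i^{(0)}$, $U_{i+m/2}^{(0)}=U_i^{(0)}$, $c_{i+m/2}^{(0)}=-c_i^{(0)}$. $\Omega_\rho=\{\varphi:|c_i-c_i^{(0)}|\le\rho_c/\sqrt m,\|U_i-U_i^{(0)}\|_2\le\rho_u/\sqrt m,\|W_i-W_i^{(0)}\|_F\le\rho_w/\sqrt m\ \forall i\}$. $B_{U,m}(\delta')=\sqrt d+\sqrt{2\log(m/(2\delta'))}+\rho_u/\sqrt m$, $L_{1,m}(\delta')=\sigma_1\sqrt{1+B_{U,m}(\delta')^2}$. $\mathcal E_{U,m}(\delta')=\{\max_{i\in[m]}\|U_i^{(0)}\|_2\le\sqrt d+\sqrt{2\log(m/(2\delta'))}\}$. With $\varphi_0=(c,U,\operatorname{vec}W)$ distributed as $\varphi_1^{(0)}$: $\phi_c(X)=\sigma(U^\top a(X;W))$, $\phi_u(X)=\sigma'(U^\top a(X;W))a(X;W)$, $\phi_w(X)=\sigma'(U^\top a(X;W))(M(X;W)U)q_X^\top$; $\tilde f(X;v)=\mathbb E[\phi_c(X)v_c(\varphi_0)]+\mathbb E[\langle\phi_u(X),v_u(\varphi_0)\rangle]+\mathbb E[\langle\phi_w(X),v_w(\varphi_0)\rangle_F]$; $\mathcal V_{\bar\nu}$: measurable $v=(v_c,v_u,v_w)$ with $\sup|v_c|\le\bar\nu_c$, $\sup\|v_u\|_2\le\bar\nu_u$,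 $\sup\|v_w\|_F\le\bar\nu_w$. *)

theory Defs
  imports "HOL-Probability.Probability"
begin

text \<open>Dimensions d and T are the finite index types 'd and 'T.
  Tokens X are real d x T matrices, encoded as real^'T^'d (row index 'd, column index 'T);
  column t of X is the token X_t.\<close>

definition token_set :: "(real^'T^'d) set" where
  "token_set = {X. \<forall>t. norm (column t X) \<le> 1}"

definition softmax :: "real^'T \<Rightarrow> real^'T" where
  "softmax z = (\<chi> t. exp (z$t) / (\<Sum>s\<in>UNIV. exp (z$s)))"

definition softmax_jac :: "real^'T \<Rightarrow> real^'T^'T" where
  "softmax_jac z = (\<chi> t s. (if t = s then softmax z $ t else 0) - softmax z $ t * softmax z $ s)"

definition attn :: "real^'T^'d \<Rightarrow> real^'d \<Rightarrow> real^'d^'d \<Rightarrow> real^'d" where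
  "attn X q W = X *v softmax (transpose X *v (W *v q))"

definition Mmat :: "real^'T^'d \<Rightarrow> real^'d \<Rightarrow> real^'d^'d \<Rightarrow> real^'d^'d" where
  "Mmat X q W = X ** softmax_jac (transpose X *v (W *v q)) ** transpose X"

definition hneuron :: "(real \<Rightarrow> real) \<Rightarrow> real^'T^'d \<Rightarrow> real^'d \<Rightarrow> real^'d \<Rightarrow> real^'d^'d \<Rightarrow> real" where
  "hneuron \<sigma> X q U W = \<sigma> (U \<bullet> attn X q W)"

definition fnet :: "(real \<Rightarrow> real) \<Rightarrow> nat \<Rightarrow> real^'T^'d \<Rightarrow> real^'d
    \<Rightarrow> (nat \<Rightarrow> real) \<Rightarrow> (nat \<Rightarrow> real^'d) \<Rightarrow> (nat \<Rightarrow> real^'d^'d) \<Rightarrow> real" where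
  "fnet \<sigma> m X q c U W = (1 / sqrt (real m)) * (\<Sum>i<m. c i * hneuron \<sigma> X q (U i) (W i))"

definition sym_init :: "nat \<Rightarrow> (nat \<Rightarrow> real) \<Rightarrow> (nat \<Rightarrow> real^'d) \<Rightarrow> (nat \<Rightarrow> real^'d^'d) \<Rightarrow> bool" where
  "sym_init m c0 U0 W0 \<longleftrightarrow> (\<forall>i < m div 2.
      c0 i \<in> {-1, 1} \<and> W0 (i + m div 2) = W0 i \<and> U0 (i + m div 2) = U0 i
      \<and> c0 (i + m div 2) = - c0 i)"

text \<open>Norm on real^'d^'d is the Frobenius norm.\<close>
definition Omega :: "nat \<Rightarrow> real \<Rightarrow> real \<Rightarrow> real \<Rightarrow> (nat \<Rightarrow> real) \<Rightarrow> (nat \<Rightarrow> real^'d) \<Rightarrow> (nat \<Rightarrow> real^'d^'d)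
    \<Rightarrow> ((nat \<Rightarrow> real) \<times> (nat \<Rightarrow> real^'d) \<times> (nat \<Rightarrow> real^'d^'d)) set" where
  "Omega m \<rho>c \<rho>u \<rho>w c0 U0 W0 = {(c, U, W). \<forall>i < m.
      \<bar>c i - c0 i\<bar> \<le> \<rho>c / sqrt (real m) \<and> norm (U i - U0 i) \<le> \<rho>u / sqrt (real m)
      \<and> norm (W i - W0 i) \<le> \<rho>w / sqrt (real m)}"

definition B_U :: "nat \<Rightarrow> nat \<Rightarrow> real \<Rightarrow> real \<Rightarrow> real" where
  "B_U d m \<delta> \<rho>u = sqrt (real d) + sqrt (2 * ln (real m / (2 * \<delta>))) + \<rho>u / sqrt (real m)"

definition L1 :: "real \<Rightarrow> nat \<Rightarrow> nat \<Rightarrow> real \<Rightarrow> real \<Rightarrow> real" where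
  "L1 \<sigma>1 d m \<delta> \<rho>u = \<sigma>1 * sqrt (1 + (B_U d m \<delta> \<rho>u)^2)"

definition event_U :: "nat \<Rightarrow> nat \<Rightarrow> real \<Rightarrow> (nat \<Rightarrow> real^'d) \<Rightarrow> bool" where
  "event_U d m \<delta> U0 \<longleftrightarrow> (\<forall>i < m. norm (U0 i) \<le> sqrt (real d) + sqrt (2 * ln (real m / (2 * \<delta>))))"

definition gauss1 :: "real measure" where
  "gauss1 = density lborel std_normal_density"

definition gauss_vec :: "(real^'d) measure" where
  "gauss_vec = distr (PiM UNIV (\<lambda>_::'d. gauss1)) borel (\<lambda>f. \<chi> i. f i)"

definition gauss_mat :: "(real^'d^'d) measure" where
  "gauss_mat = distr (PiM UNIV (\<lambda>_::('d \<times> 'd). gauss1)) borel (\<lambda>f. \<chi> i j. f (i, j))"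

definition sign_meas :: "real measure" where
  "sign_meas = measure_pmf (pmf_of_set {-1, 1})"

definition init_meas :: "(real \<times> (real^'d) \<times> (real^'d^'d)) measure" where
  "init_meas = sign_meas \<Otimes>\<^sub>M (gauss_vec \<Otimes>\<^sub>M gauss_mat)"

definition phi_c :: "(real \<Rightarrow> real) \<Rightarrow> real^'T^'d \<Rightarrow> real^'d \<Rightarrow> real \<times> (real^'d) \<times> (real^'d^'d) \<Rightarrow> real" where
  "phi_c \<sigma> X q p = (case p of (c, U, W) \<Rightarrow> \<sigma> (U \<bullet> attn X q W))"

definition phi_u :: "(real \<Rightarrow> real) \<Rightarrow> real^'T^'d \<Rightarrow> real^'d \<Rightarrow> real \<times> (real^'d) \<times> (real^'d^'d) \<Rightarrow> real^'d" where
  "phi_u \<sigma>' X q p = (case p of (c, U, W) \<Rightarrow> \<sigma>' (U \<bullet> attn X q W) *\<^sub>R attn X q W)"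

definition phi_w :: "(real \<Rightarrow> real) \<Rightarrow> real^'T^'d \<Rightarrow> real^'d \<Rightarrow> real \<times> (real^'d) \<times> (real^'d^'d) \<Rightarrow> real^'d^'d" where
  "phi_w \<sigma>' X q p = (case p of (c, U, W) \<Rightarrow>
      \<sigma>' (U \<bullet> attn X q W) *\<^sub>R (\<chi> i j. (Mmat X q W *v U) $ i * q $ j))"

text \<open>f-tilde(X;v); inner product on real^'d^'d is the Frobenius inner product.\<close>
definition ftilde :: "(real \<Rightarrow> real) \<Rightarrow> (real \<Rightarrow> real) \<Rightarrow> real^'T^'d \<Rightarrow> real^'d
    \<Rightarrow> (real \<times> (real^'d) \<times> (real^'d^'d) \<Rightarrow> real)
    \<Rightarrow> (real \<times> (real^'d) \<times> (real^'d^'d) \<Rightarrow> real^'d)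
    \<Rightarrow> (real \<times> (real^'d) \<times> (real^'d^'d) \<Rightarrow> real^'d^'d) \<Rightarrow> real" where
  "ftilde \<sigma> \<sigma>' X q vc vu vw =
      (\<integral>p. phi_c \<sigma> X q p * vc p \<partial>init_meas)
    + (\<integral>p. phi_u \<sigma>' X q p \<bullet> vu p \<partial>init_meas)
    + (\<integral>p. phi_w \<sigma>' X q p \<bullet> vw p \<partial>init_meas)"

end

theory Submission
  imports Defs
begin

lemma lip_real:
  fixes f f' :: "real \<Rightarrow> real"
  assumes d: "\<And>x. (f has_real_derivative f' x) (at x)" and b: "\<And>x. \<bar>f' x\<bar> \<le> L"
  shows "\<bar>f b - f a\<bar> \<le> L * \<bar>b - a\<bar>"
proof -
  have key: "\<bar>f y - f x\<bar> \<le> L * \<bar>y - x\<bar>" if xy: "x < y" for x y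
  proof -
    have "\<exists>z>x. z < y \<and> f y - f x = (y - x) * f' z" by (rule MVT2[OF xy]) (rule d)
    then obtain z where "f y - f x = (y - x) * f' z" by blast
    then have "\<bar>f y - f x\<bar> = \<bar>y - x\<bar> * \<bar>f' z\<bar>" by (simp add: abs_mult)
    also have "\<dots> \<le> \<bar>y - x\<bar> * L" by (intro mult_left_mono b) auto
    finally show ?thesis by (simp only: mult.commute)
  qed
  show ?thesis
  proof (cases a b rule: linorder_cases)
    case less then show ?thesis using key by auto
  next
    case equal then show ?thesis using b[of 0] by auto
  next
    case greater then show ?thesis using key[of b a] by (simp add: abs_minus_commute)
  qed
qed

lemma cov_bound:
  fixes p a b :: "'T::finite \<Rightarrow> real"
  assumes p0: "\<And>t. 0 \<le> p t" and p1: "(\<Sum>t\<in>UNIV. p t) = 1"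
    and ha: "\<And>t. \<bar>a t\<bar> \<le> A" and hb: "\<And>t. \<bar>b t\<bar> \<le> B"
  shows "\<bar>\<Sum>t\<in>UNIV. p t * b t * (a t - (\<Sum>s\<in>UNIV. p s * a s))\<bar> \<le> A * B"
proof -
  define ab where "ab = (\<Sum>s\<in>UNIV. p s * a s)"
  define u :: "real^'T" where "u = (\<chi> t. sqrt (p t) * b t)"
  define v :: "real^'T" where "v = (\<chi> t. sqrt (p t) * (a t - ab))"
  have uv: "u \<bullet> v = (\<Sum>t\<in>UNIV. p t * b t * (a t - ab))"
    unfolding u_def v_def inner_vec_def
    by (intro sum.cong) (auto simp: p0 real_sqrt_mult[symmetric])
  have uu: "u \<bullet> u = (\<Sum>t\<in>UNIV. p t * (b t)^2)"
    unfolding u_def inner_vec_def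
    by (intro sum.cong) (auto simp: p0 power2_eq_square real_sqrt_mult[symmetric])
  have vv: "v \<bullet> v = (\<Sum>t\<in>UNIV. p t * (a t - ab)^2)"
    unfolding v_def inner_vec_def
    by (intro sum.cong) (auto simp: p0 power2_eq_square real_sqrt_mult[symmetric])
  have B0: "0 \<le> B" using hb[of undefined] by linarith
  have A0: "0 \<le> A" using ha[of undefined] by linarith
  have "u \<bullet> u \<le> (\<Sum>t\<in>UNIV. p t * B^2)"
    unfolding uu
  proof (intro sum_mono mult_left_mono p0)
    fix t show "(b t)^2 \<le> B^2" using power_mono[OF hb[of t] abs_ge_zero, of 2] by simp
  qed
  also have "\<dots> = B^2" by (metis p1 sum_distrib_right mult_1)
  finally have "norm u ^ 2 \<le> B^2" by (simp add: power2_norm_eq_inner)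
  from this B0 have nu: "norm u \<le> B" by (rule power2_le_imp_le)
  have "(\<Sum>t\<in>UNIV. p t * (a t - ab)^2) = (\<Sum>t\<in>UNIV. p t * (a t)^2) - 2 * ab * (\<Sum>t\<in>UNIV. p t * a t) + ab^2 * (\<Sum>t\<in>UNIV. p t)"
    by (simp add: power2_diff algebra_simps sum.distrib sum_subtractf sum_distrib_left sum_distrib_right)
  also have "\<dots> = (\<Sum>t\<in>UNIV. p t * (a t)^2) - ab^2"
    by (simp add: p1 ab_def[symmetric] power2_eq_square)
  also have "\<dots> \<le> (\<Sum>t\<in>UNIV. p t * A^2)"
  proof -
    have "(\<Sum>t\<in>UNIV. p t * (a t)^2) \<le> (\<Sum>t\<in>UNIV. p t * A^2)"
    proof (intro sum_mono mult_left_mono p0)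
      fix t show "(a t)^2 \<le> A^2" using power_mono[OF ha[of t] abs_ge_zero, of 2] by simp
    qed
    then show ?thesis by (smt (verit) zero_le_power2)
  qed
  also have "\<dots> = A^2" by (metis p1 sum_distrib_right mult_1)
  finally have "norm v ^ 2 \<le> A^2" using vv by (simp add: power2_norm_eq_inner)
  from this A0 have nv: "norm v \<le> A" by (rule power2_le_imp_le)
  have "\<bar>u \<bullet> v\<bar> \<le> norm u * norm v" by (rule Cauchy_Schwarz_ineq2)
  also have "\<dots> \<le> B * A" by (intro mult_mono nu nv) (use B0 in auto)
  finally show ?thesis using uv ab_def by (simp add: mult.commute)
qed



lemma softmax_pos: "0 < softmax z $ t"
  unfolding softmax_def by (auto intro!: divide_pos_pos sum_pos)

lemma softmax_sum: "(\<Sum>t\<in>UNIV. softmax z $ t) = 1"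
proof -
  have "(\<Sum>s\<in>UNIV. exp (z$s)) > 0" by (auto intro!: sum_pos)
  then show ?thesis unfolding softmax_def by (simp add: sum_divide_distrib[symmetric])
qed

lemma softmax_lip:
  fixes z h :: "real^'T" and k :: "'T \<Rightarrow> real"
  assumes hk: "\<And>t. \<bar>k t\<bar> \<le> B" and hh: "\<And>t. \<bar>h $ t\<bar> \<le> A"
  shows "\<bar>(\<Sum>t\<in>UNIV. k t * softmax (z + h) $ t) - (\<Sum>t\<in>UNIV. k t * softmax z $ t)\<bar> \<le> A * B"
proof -
  define e where "e = (\<lambda>\<tau> t. exp (z$t + \<tau> * h$t))"
  define S where "S = (\<lambda>\<tau>. \<Sum>s\<in>UNIV. e \<tau> s)"
  define g where "g = (\<lambda>\<tau>. \<Sum>t\<in>UNIV. k t * (e \<tau> t / S \<tau>))"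
  define P where "P = (\<lambda>\<tau> t. e \<tau> t / S \<tau>)"
  define g' where "g' = (\<lambda>\<tau>. \<Sum>t\<in>UNIV. P \<tau> t * k t * (h$t - (\<Sum>s\<in>UNIV. P \<tau> s * h$s)))"
  have Spos: "S \<tau> > 0" for \<tau> unfolding S_def e_def by (auto intro!: sum_pos)
  have de: "((\<lambda>\<tau>. e \<tau> t) has_real_derivative e \<tau> t * h$t) (at \<tau>)" for \<tau> t
    unfolding e_def by (auto intro!: derivative_eq_intros)
  have dS: "(S has_real_derivative (\<Sum>s\<in>UNIV. e \<tau> s * h$s)) (at \<tau>)" for \<tau>
    unfolding S_def by (intro DERIV_sum de)
  have dg: "(g has_real_derivative g' \<tau>) (at \<tau>)" for \<tau>
  proof -
    have "(g has_real_derivative (\<Sum>t\<in>UNIV. k t * ((e \<tau> t * h$t * S \<tau> - e \<tau> t * (\<Sum>s\<in>UNIV. e \<tau> s * h$s)) / (S \<tau> * S \<tau>)))) (at \<tau>)"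
      unfolding g_def
      by (intro DERIV_sum DERIV_cmult DERIV_divide de dS) (use Spos[of \<tau>] in auto)
    moreover have "(\<Sum>t\<in>UNIV. k t * ((e \<tau> t * h$t * S \<tau> - e \<tau> t * (\<Sum>s\<in>UNIV. e \<tau> s * h$s)) / (S \<tau> * S \<tau>))) = g' \<tau>"
    proof -
      have "(\<Sum>s\<in>UNIV. P \<tau> s * h$s) = (\<Sum>s\<in>UNIV. e \<tau> s * h$s) / S \<tau>"
        unfolding P_def by (simp add: sum_divide_distrib)
      moreover have alg: "k * ((e * h * S - e * Q) / (S * S)) = e / S * k * (h - Q / S)"
        if "S > 0" for k e h S Q :: real using that by (simp add: field_simps power2_eq_square)
      ultimately show ?thesis unfolding g'_def
        using Spos[of \<tau>] by (intro sum.cong refl) (simp only: alg P_def)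
    qed
    ultimately show ?thesis by simp
  qed
  have bg: "\<bar>g' \<tau>\<bar> \<le> A * B" for \<tau>
    unfolding g'_def
  proof (rule cov_bound)
    show "0 \<le> P \<tau> t" for t unfolding P_def e_def using Spos[of \<tau>] by auto
    show "(\<Sum>t\<in>UNIV. P \<tau> t) = 1" unfolding P_def using Spos[of \<tau>]
      by (simp add: sum_divide_distrib[symmetric] S_def)
  qed (use hk hh in auto)
  have "\<bar>g 1 - g 0\<bar> \<le> A * B * \<bar>1 - 0\<bar>" by (rule lip_real[OF dg bg])
  moreover have "g 1 = (\<Sum>t\<in>UNIV. k t * softmax (z + h) $ t)"
    unfolding g_def e_def S_def softmax_def by simp
  moreover have "g 0 = (\<Sum>t\<in>UNIV. k t * softmax z $ t)"
    unfolding g_def e_def S_def softmax_def by simp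
  ultimately show ?thesis by simp
qed



lemma mat_vec_norm:
  fixes A :: "real^'n^'m" and x :: "real^'n"
  shows "norm (A *v x) \<le> norm A * norm x"
proof -
  have c: "(A *v x) $ i = A$i \<bullet> x" for i
    by (simp add: matrix_vector_mult_def inner_vec_def)
  have "norm (A *v x) ^ 2 = (\<Sum>i\<in>UNIV. ((A *v x) $ i) * ((A *v x) $ i))"
    by (simp only: power2_norm_eq_inner inner_vec_def inner_real_def)
  also have "\<dots> = (\<Sum>i\<in>UNIV. (A$i \<bullet> x)^2)"
    by (simp only: c power2_eq_square)
  also have "\<dots> \<le> (\<Sum>i\<in>UNIV. (norm (A$i))^2 * (norm x)^2)"
  proof (rule sum_mono)
    fix i
    have "\<bar>A$i \<bullet> x\<bar> \<le> norm (A$i) * norm x" by (rule Cauchy_Schwarz_ineq2)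
    then have "\<bar>A$i \<bullet> x\<bar>^2 \<le> (norm (A$i) * norm x)^2" by (rule power_mono) simp
    then show "(A$i \<bullet> x)^2 \<le> (norm (A$i))^2 * (norm x)^2" by (simp add: power_mult_distrib)
  qed
  also have "\<dots> = (norm A * norm x)^2"
    by (simp add: power_mult_distrib sum_distrib_right[symmetric] power2_norm_eq_inner inner_vec_def[of A A])
  finally have "norm (A *v x) ^ 2 \<le> (norm A * norm x)^2" .
  from this show ?thesis by (rule power2_le_imp_le) simp
qed

lemma transpose_mv_nth: "(transpose X *v v) $ t = column t X \<bullet> (v :: real^'d)"
  by (simp add: matrix_vector_mult_def transpose_def column_def inner_vec_def mult.commute)

lemma inner_attn:
  "U \<bullet> attn X q W = (\<Sum>t\<in>UNIV. (U \<bullet> column t X) * softmax (transpose X *v (W *v q)) $ t)"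
  unfolding attn_def matrix_mult_sum
  by (simp add: inner_sum_right scalar_mult_eq_scaleR mult.commute)

lemma norm_attn:
  assumes "X \<in> token_set"
  shows "norm (attn X q W) \<le> 1"
proof -
  let ?s = "softmax (transpose X *v (W *v q))"
  have "norm (attn X q W) = norm (\<Sum>t\<in>UNIV. ?s $ t *\<^sub>R column t X)"
    unfolding attn_def matrix_mult_sum by (simp add: scalar_mult_eq_scaleR)
  also have "\<dots> \<le> (\<Sum>t\<in>UNIV. norm (?s $ t *\<^sub>R column t X))" by (rule norm_sum)
  also have "\<dots> \<le> (\<Sum>t\<in>UNIV. ?s $ t)"
  proof (rule sum_mono)
    fix t
    have "norm (column t X) \<le> 1" using assms unfolding token_set_def by auto
    then show "norm (?s $ t *\<^sub>R column t X) \<le> ?s $ t"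
      using softmax_pos[of "transpose X *v (W *v q)" t] by (simp add: mult_left_le)
  qed
  also have "\<dots> = 1" by (rule softmax_sum)
  finally show ?thesis .
qed

lemma attn_diff:
  assumes X: "X \<in> token_set" and q: "norm q \<le> 1"
  shows "\<bar>U0 \<bullet> attn X q W - U0 \<bullet> attn X q W0\<bar> \<le> norm (W - W0) * norm U0"
proof -
  define z0 where "z0 = transpose X *v (W0 *v q)"
  define h where "h = transpose X *v ((W - W0) *v q)"
  have z1: "transpose X *v (W *v q) = z0 + h"
    unfolding z0_def h_def by (simp add: matrix_vector_mult_diff_rdistrib matrix_vector_mult_diff_distrib)
  have col: "norm (column t X) \<le> 1" for t using X unfolding token_set_def by auto
  have hk: "\<bar>U0 \<bullet> column t X\<bar> \<le> norm U0" for t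
    using Cauchy_Schwarz_ineq2[of U0 "column t X"] col[of t]
    by (smt (verit) mult_left_le norm_ge_zero)
  have hh: "\<bar>h $ t\<bar> \<le> norm (W - W0)" for t
  proof -
    have "\<bar>h $ t\<bar> \<le> norm (column t X) * norm ((W - W0) *v q)"
      unfolding h_def transpose_mv_nth by (rule Cauchy_Schwarz_ineq2)
    also have "\<dots> \<le> 1 * (norm (W - W0) * norm q)"
      by (intro mult_mono col mat_vec_norm) auto
    also have "\<dots> \<le> norm (W - W0)" using q by (simp add: mult_left_le)
    finally show ?thesis .
  qed
  show ?thesis
    unfolding inner_attn z1 z0_def[symmetric]
    by (rule softmax_lip[OF hk hh])
qed

lemma neuron_diff:
  fixes \<sigma> \<sigma>' :: "real \<Rightarrow> real"
  assumes d: "\<And>x. (\<sigma> has_real_derivative \<sigma>' x) (at x)" and b: "\<And>x. \<bar>\<sigma>' x\<bar> \<le> \<sigma>1"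
    and X: "X \<in> token_set" and q: "norm q \<le> 1"
  shows "\<bar>hneuron \<sigma> X q U W - hneuron \<sigma> X q U0 W0\<bar> \<le> \<sigma>1 * (norm (U - U0) + norm U0 * norm (W - W0))"
proof -
  have s0: "0 \<le> \<sigma>1" using b[of 0] by linarith
  have "\<bar>hneuron \<sigma> X q U W - hneuron \<sigma> X q U0 W0\<bar> \<le> \<sigma>1 * \<bar>U \<bullet> attn X q W - U0 \<bullet> attn X q W0\<bar>"
    unfolding hneuron_def by (rule lip_real[OF d b])
  also have "\<bar>U \<bullet> attn X q W - U0 \<bullet> attn X q W0\<bar> \<le> norm (U - U0) + norm U0 * norm (W - W0)"
  proof -
    have e: "U \<bullet> attn X q W - U0 \<bullet> attn X q W0 = (U - U0) \<bullet> attn X q W + (U0 \<bullet> attn X q W - U0 \<bullet> attn X q W0)"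
      by (simp add: inner_diff_left)
    have "\<bar>(U - U0) \<bullet> attn X q W\<bar> \<le> norm (U - U0) * norm (attn X q W)" by (rule Cauchy_Schwarz_ineq2)
    also have "\<dots> \<le> norm (U - U0)" using norm_attn[OF X, of q W] by (simp add: mult_left_le)
    finally have 1: "\<bar>(U - U0) \<bullet> attn X q W\<bar> \<le> norm (U - U0)" .
    have 2: "\<bar>U0 \<bullet> attn X q W - U0 \<bullet> attn X q W0\<bar> \<le> norm U0 * norm (W - W0)"
      using attn_diff[OF X q, of U0 W W0] by (simp add: mult.commute)
    show ?thesis unfolding e using 1 2 by linarith
  qed
  then have "\<sigma>1 * \<bar>U \<bullet> attn X q W - U0 \<bullet> attn X q W0\<bar> \<le> \<sigma>1 * (norm (U - U0) + norm U0 * norm (W - W0))"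
    by (rule mult_left_mono) (rule s0)
  finally show ?thesis .
qed



lemma sum_split_half:
  fixes f :: "nat \<Rightarrow> real"
  shows "(\<Sum>i<n+n. f i) = (\<Sum>i<n. f i + f (i + n))"
proof -
  have "(\<Sum>i<n+n. f i) = (\<Sum>i<n. f i) + (\<Sum>i\<in>{n..<n+n}. f i)"
    by (simp add: lessThan_atLeast0 sum.atLeastLessThan_concat)
  also have "(\<Sum>i\<in>{n..<n+n}. f i) = (\<Sum>i<n. f (i + n))"
    using sum.shift_bounds_nat_ivl[of f 0 n n] by (simp add: lessThan_atLeast0)
  finally show ?thesis by (simp add: sum.distrib)
qed

lemma cs2:
  fixes a b x y :: real
  shows "a * x + b * y \<le> sqrt (a^2 + b^2) * sqrt (x^2 + y^2)"
proof -
  have "(a * x + b * y)^2 \<le> (a^2 + b^2) * (x^2 + y^2)"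
    using zero_le_power2[of "a*y - b*x"] by (simp add: power2_eq_square algebra_simps)
  then have "\<bar>a * x + b * y\<bar> \<le> sqrt ((a^2 + b^2) * (x^2 + y^2))"
    by (metis real_sqrt_abs real_sqrt_le_mono)
  then show ?thesis by (simp add: real_sqrt_mult)
qed




lemma part1:
  fixes \<sigma> \<sigma>' :: "real \<Rightarrow> real" and \<sigma>0 \<sigma>1 :: real
    and q :: "real^'T^'d \<Rightarrow> real^'d"
    and m :: nat and \<delta> :: real
    and c0 :: "nat \<Rightarrow> real" and U0 :: "nat \<Rightarrow> real^'d" and W0 :: "nat \<Rightarrow> real^'d^'d"
  assumes deriv1: "\<And>x. (\<sigma> has_real_derivative \<sigma>' x) (at x)"
    and bd0: "\<And>x. \<bar>\<sigma> x\<bar> \<le> \<sigma>0"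
    and bd1: "\<And>x. \<bar>\<sigma>' x\<bar> \<le> \<sigma>1"
    and q_bd: "\<And>X. norm (q X) \<le> 1"
    and m_even: "even m" and m_pos: "0 < m"
    and init: "sym_init m c0 U0 W0"
    and event: "event_U CARD('d) m \<delta> U0"
    and pos: "0 < \<rho>c" "0 < \<rho>u" "0 < \<rho>w"
    and Om: "(c, U, W) \<in> Omega m \<rho>c \<rho>u \<rho>w c0 U0 W0"
    and X: "X \<in> token_set"
  shows "\<bar>fnet \<sigma> m X (q X) c U W\<bar> \<le> L1 \<sigma>1 CARD('d) m \<delta> \<rho>u * sqrt (\<rho>u^2 + \<rho>w^2) + \<sigma>0 * \<rho>c"
proof -
  define n where "n = m div 2"
  have mn: "m = n + n" using m_even unfolding n_def by auto
  define h where "h = (\<lambda>i. hneuron \<sigma> X (q X) (U i) (W i))"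
  define h0 where "h0 = (\<lambda>i. hneuron \<sigma> X (q X) (U0 i) (W0 i))"
  define sm where "sm = sqrt (real m)"
  have smpos: "sm > 0" unfolding sm_def using m_pos by simp
  define K where "K = L1 \<sigma>1 CARD('d) m \<delta> \<rho>u * sqrt (\<rho>u^2 + \<rho>w^2) + \<sigma>0 * \<rho>c"
  have s0: "0 \<le> \<sigma>0" using bd0[of 0] by linarith
  have s1: "0 \<le> \<sigma>1" using bd1[of 0] by linarith
  have S0: "(\<Sum>i<m. c0 i * h0 i) = 0"
  proof -
    have "(\<Sum>i<m. c0 i * h0 i) = (\<Sum>i<n. c0 i * h0 i + c0 (i + n) * h0 (i + n))"
      unfolding mn by (rule sum_split_half)
    also have "\<dots> = 0"
    proof (rule sum.neutral, rule ballI)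
      fix i assume "i \<in> {..<n}"
      then have "i < m div 2" by (simp add: n_def)
      with init have "U0 (i + n) = U0 i" "W0 (i + n) = W0 i" "c0 (i + n) = - c0 i"
        unfolding sym_init_def n_def by auto
      then show "c0 i * h0 i + c0 (i + n) * h0 (i + n) = 0" unfolding h0_def by simp
    qed
    finally show ?thesis .
  qed
  have c0abs: "\<bar>c0 i\<bar> = 1" if "i < m" for i
  proof (cases "i < n")
    case True
    then show ?thesis using init unfolding sym_init_def n_def by auto
  next
    case False
    define j where "j = i - n"
    have j: "i = j + n" "j < n" using False that mn by (auto simp: j_def)
    then have "c0 i = - c0 j" "c0 j \<in> {-1, 1}" using init unfolding sym_init_def n_def by auto
    then show ?thesis by auto
  qed
  have Bnd: "norm (U0 i) \<le> B_U CARD('d) m \<delta> \<rho>u" if "i < m" for i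
  proof -
    have "norm (U0 i) \<le> sqrt (real CARD('d)) + sqrt (2 * ln (real m / (2 * \<delta>)))"
      using event that unfolding event_U_def by auto
    moreover have "0 \<le> \<rho>u / sqrt (real m)" using pos by simp
    ultimately show ?thesis unfolding B_U_def by linarith
  qed
  have trm: "\<bar>c i * h i - c0 i * h0 i\<bar> \<le> K / sm" if i: "i < m" for i
  proof -
    have om: "\<bar>c i - c0 i\<bar> \<le> \<rho>c / sm" "norm (U i - U0 i) \<le> \<rho>u / sm" "norm (W i - W0 i) \<le> \<rho>w / sm"
      using Om i unfolding Omega_def sm_def by auto
    have e: "c i * h i - c0 i * h0 i = (c i - c0 i) * h i + c0 i * (h i - h0 i)"
      by (simp add: algebra_simps)
    have 1: "\<bar>(c i - c0 i) * h i\<bar> \<le> \<rho>c / sm * \<sigma>0"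
      unfolding abs_mult h_def hneuron_def by (intro mult_mono om bd0) (use pos smpos in auto)
    have nd: "\<bar>h i - h0 i\<bar> \<le> \<sigma>1 * (norm (U i - U0 i) + norm (U0 i) * norm (W i - W0 i))"
      unfolding h_def h0_def by (rule neuron_diff[OF deriv1 bd1 X q_bd])
    also have "\<dots> \<le> \<sigma>1 * (\<rho>u / sm + norm (U0 i) * (\<rho>w / sm))"
      by (intro mult_left_mono add_mono om mult_left_mono s1) auto
    also have "\<dots> = \<sigma>1 * (1 * \<rho>u + norm (U0 i) * \<rho>w) / sm" by (simp add: field_simps add_divide_distrib)
    also have "\<dots> \<le> \<sigma>1 * (sqrt (1^2 + (norm (U0 i))^2) * sqrt (\<rho>u^2 + \<rho>w^2)) / sm"
      by (intro divide_right_mono mult_left_mono cs2 s1) (use smpos in auto)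
    also have "\<dots> \<le> \<sigma>1 * (sqrt (1 + (B_U CARD('d) m \<delta> \<rho>u)^2) * sqrt (\<rho>u^2 + \<rho>w^2)) / sm"
    proof -
      have "(norm (U0 i))^2 \<le> (B_U CARD('d) m \<delta> \<rho>u)^2"
        by (rule power_mono[OF Bnd[OF i]]) simp
      then have "sqrt (1^2 + (norm (U0 i))^2) \<le> sqrt (1 + (B_U CARD('d) m \<delta> \<rho>u)^2)" by simp
      then show ?thesis
        by (intro divide_right_mono mult_left_mono mult_right_mono s1) (use smpos in auto)
    qed
    also have "\<dots> = L1 \<sigma>1 CARD('d) m \<delta> \<rho>u * sqrt (\<rho>u^2 + \<rho>w^2) / sm"
      unfolding L1_def by simp
    finally have 2: "\<bar>c0 i * (h i - h0 i)\<bar> \<le> L1 \<sigma>1 CARD('d) m \<delta> \<rho>u * sqrt (\<rho>u^2 + \<rho>w^2) / sm"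
      by (simp add: abs_mult c0abs[OF i])
    have "\<bar>c i * h i - c0 i * h0 i\<bar> \<le> \<rho>c / sm * \<sigma>0 + L1 \<sigma>1 CARD('d) m \<delta> \<rho>u * sqrt (\<rho>u^2 + \<rho>w^2) / sm"
      unfolding e using 1 2 by linarith
    also have "\<dots> = K / sm" unfolding K_def by (simp add: field_simps add_divide_distrib)
    finally show ?thesis .
  qed
  have "\<bar>\<Sum>i<m. c i * h i\<bar> = \<bar>\<Sum>i<m. c i * h i - c0 i * h0 i\<bar>"
    by (simp add: sum_subtractf S0)
  also have "\<dots> \<le> (\<Sum>i<m. \<bar>c i * h i - c0 i * h0 i\<bar>)" by (rule sum_abs)
  also have "\<dots> \<le> (\<Sum>i<m. K / sm)" by (rule sum_mono) (simp add: trm)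
  also have "\<dots> = real m * K / sm" by simp
  finally have A: "\<bar>\<Sum>i<m. c i * h i\<bar> \<le> real m * K / sm" .
  have "\<bar>fnet \<sigma> m X (q X) c U W\<bar> = \<bar>\<Sum>i<m. c i * h i\<bar> / sm"
    unfolding fnet_def h_def sm_def by (simp add: abs_mult)
  also have "\<dots> \<le> real m * K / sm / sm" by (rule divide_right_mono[OF A]) (use smpos in auto)
  also have "\<dots> = K" using smpos unfolding sm_def by (simp add: field_simps)
  finally show ?thesis unfolding K_def .
qed




lemma vec_measurable:
  fixes F :: "'a \<Rightarrow> ('b::euclidean_space)^'n"
  assumes "\<And>i. (\<lambda>x. F x $ i) \<in> borel_measurable M"
  shows "F \<in> borel_measurable M"
proof (subst borel_measurable_euclidean_space, intro ballI)
  fix b :: "('b)^'n" assume "b \<in> Basis"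
  then obtain i u where bu: "b = axis i u" "u \<in> Basis" unfolding Basis_vec_def by auto
  have "(\<lambda>x. F x $ i \<bullet> u) \<in> borel_measurable M"
    using assms[of i] by measurable
  then show "(\<lambda>x. F x \<bullet> b) \<in> borel_measurable M" unfolding bu inner_axis .
qed

lemma sets_gauss1: "sets gauss1 = sets borel"
  unfolding gauss1_def by simp

lemma prob_gauss1: "prob_space gauss1"
  unfolding gauss1_def by (rule prob_space_normal_density) simp

lemma comp_meas: "(\<lambda>f. f i) \<in> borel_measurable (PiM I (\<lambda>_. gauss1))" if "i \<in> I"
proof -
  have "(\<lambda>f. f i) \<in> measurable (PiM I (\<lambda>_. gauss1)) gauss1"
    by (rule measurable_component_singleton[OF that])
  then show ?thesis using measurable_cong_sets[OF refl sets_gauss1, of "PiM I (\<lambda>_. gauss1)"] by simp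
qed

lemma meas_vec: "(\<lambda>f. \<chi> i. f i) \<in> borel_measurable (PiM UNIV (\<lambda>_::'d::finite. gauss1))"
  by (rule vec_measurable) (simp add: comp_meas)

lemma meas_mat: "(\<lambda>f. \<chi> i j. f (i, j)) \<in> (borel_measurable (PiM UNIV (\<lambda>_::('d::finite \<times> 'd). gauss1)) :: (_ \<Rightarrow> real^'d^'d) set)"
  by (intro vec_measurable) (simp add: comp_meas)

lemma prob_gauss_vec: "prob_space (gauss_vec :: (real^'d) measure)"
  unfolding gauss_vec_def
  by (rule prob_space.prob_space_distr[OF prob_space_PiM[OF prob_gauss1] meas_vec])

lemma prob_gauss_mat: "prob_space (gauss_mat :: (real^'d^'d) measure)"
  unfolding gauss_mat_def
  by (rule prob_space.prob_space_distr[OF prob_space_PiM[OF prob_gauss1] meas_mat])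

lemma prob_sign: "prob_space sign_meas"
  unfolding sign_meas_def by (rule prob_space_measure_pmf)

lemma prob_init: "prob_space (init_meas :: (real \<times> (real^'d) \<times> (real^'d^'d)) measure)"
  unfolding init_meas_def
  by (intro prob_space_pair prob_sign prob_gauss_vec prob_gauss_mat)

lemma distr_pair_snd':
  assumes "prob_space M" "prob_space N"
  shows "distr (M \<Otimes>\<^sub>M N) N snd = N"
proof (intro measure_eqI)
  interpret N: prob_space N by fact
  interpret M: prob_space M by fact
  fix A assume A: "A \<in> sets (distr (M \<Otimes>\<^sub>M N) N snd)"
  from A have "emeasure (distr (M \<Otimes>\<^sub>M N) N snd) A = emeasure (M \<Otimes>\<^sub>M N) (space M \<times> A)"
    by (auto simp add: emeasure_distr space_pair_measure dest: sets.sets_into_space intro!: arg_cong2[where f=emeasure])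
  with A show "emeasure (distr (M \<Otimes>\<^sub>M N) N snd) A = emeasure N A"
    by (simp add: N.emeasure_pair_measure_Times M.emeasure_space_1)
qed simp

lemma gauss1_sq: "integrable gauss1 (\<lambda>x. x^2)" "(\<integral>x. x^2 \<partial>gauss1) = 1"
  using std_normal_distribution_even_moments[of 1] unfolding gauss1_def by (simp_all add: fact_2)




lemma sets_gauss_vec: "sets (gauss_vec :: (real^'d::finite) measure) = sets borel"
  unfolding gauss_vec_def by simp

lemma pps: "product_prob_space (\<lambda>_::'d. gauss1)"
  by (simp add: product_prob_space_def product_prob_space_axioms_def product_sigma_finite_def
      prob_gauss1 prob_space_imp_sigma_finite)

lemma sq_meas: "(\<lambda>x::real. x^2) \<in> borel_measurable gauss1"
  by (subst measurable_cong_sets[OF sets_gauss1 refl]) measurable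

lemma comp_sq:
  fixes i :: 'd
  shows "integrable (PiM UNIV (\<lambda>_::'d. gauss1)) (\<lambda>f. (f i)^2)"
    "(\<integral>f. (f i)^2 \<partial>PiM UNIV (\<lambda>_::'d. gauss1)) = 1"
proof -
  interpret P: product_prob_space "\<lambda>_::'d. gauss1" UNIV by (rule pps)
  have d: "distr (PiM UNIV (\<lambda>_::'d. gauss1)) gauss1 (\<lambda>f. f i) = gauss1"
    by (rule P.PiM_component) simp
  have m: "(\<lambda>f. f i) \<in> measurable (PiM UNIV (\<lambda>_::'d. gauss1)) gauss1"
    by (rule measurable_component_singleton) simp
  show "integrable (PiM UNIV (\<lambda>_::'d. gauss1)) (\<lambda>f. (f i)^2)"
    using integrable_distr_eq[OF m sq_meas] gauss1_sq(1) d by simp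
  show "(\<integral>f. (f i)^2 \<partial>PiM UNIV (\<lambda>_::'d. gauss1)) = 1"
    using integral_distr[OF m sq_meas] gauss1_sq(2) d by simp
qed

lemma gvec_sq:
  "integrable (gauss_vec :: (real^'d::finite) measure) (\<lambda>U. (norm U)^2)"
  "(\<integral>U. (norm U)^2 \<partial>(gauss_vec :: (real^'d::finite) measure)) = real CARD('d)"
proof -
  have nm: "(\<lambda>U::real^'d. (norm U)^2) \<in> borel_measurable borel" by measurable
  have eq: "(norm (\<chi> i. f i :: real^'d))^2 = (\<Sum>i\<in>UNIV. (f i)^2)" for f :: "'d \<Rightarrow> real"
    unfolding power2_norm_eq_inner inner_vec_def by (simp add: power2_eq_square)
  have int: "integrable (PiM UNIV (\<lambda>_::'d. gauss1)) (\<lambda>f. \<Sum>i\<in>UNIV. (f i)^2)"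
    using comp_sq(1)[where 'd='d] by simp
  show "integrable (gauss_vec :: (real^'d::finite) measure) (\<lambda>U. (norm U)^2)"
    unfolding gauss_vec_def integrable_distr_eq[OF meas_vec nm] eq using int .
  have "(\<integral>U. (norm U)^2 \<partial>(gauss_vec :: (real^'d::finite) measure))
      = (\<integral>f. (\<Sum>i\<in>UNIV. (f i)^2) \<partial>PiM UNIV (\<lambda>_::'d. gauss1))"
    unfolding gauss_vec_def integral_distr[OF meas_vec nm] eq ..
  also have "\<dots> = (\<Sum>i\<in>(UNIV::'d set). 1)"
    using comp_sq[where 'd='d] by (simp add: Bochner_Integration.integral_sum)
  finally show "(\<integral>U. (norm U)^2 \<partial>(gauss_vec :: (real^'d::finite) measure)) = real CARD('d)"
    by simp
qed

lemma init_sq: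
  "integrable (init_meas :: (real \<times> (real^'d::finite) \<times> (real^'d^'d)) measure) (\<lambda>p. (norm (fst (snd p)))^2)"
  "(\<integral>p. (norm (fst (snd p)))^2 \<partial>(init_meas :: (real \<times> (real^'d::finite) \<times> (real^'d^'d)) measure)) = real CARD('d)"
proof -
  let ?G = "(gauss_vec :: (real^'d) measure) \<Otimes>\<^sub>M (gauss_mat :: (real^'d^'d) measure)"
  have d1: "distr (sign_meas \<Otimes>\<^sub>M ?G) ?G snd = ?G"
    by (rule distr_pair_snd'[OF prob_sign prob_space_pair[OF prob_gauss_vec prob_gauss_mat]])
  have d2: "distr ?G gauss_vec fst = (gauss_vec :: (real^'d) measure)"
    by (rule prob_space.distr_pair_fst[OF prob_gauss_mat])
  have nm0: "(\<lambda>U::real^'d. (norm U)^2) \<in> borel_measurable borel" by measurable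
  have nm: "(\<lambda>U::real^'d. (norm U)^2) \<in> borel_measurable gauss_vec"
    by (subst measurable_cong_sets[OF sets_gauss_vec refl]) (rule nm0)
  have nm2: "(\<lambda>q. (norm (fst q :: real^'d))^2) \<in> borel_measurable ?G"
    using measurable_fst nm by measurable
  have ms: "snd \<in> measurable (sign_meas \<Otimes>\<^sub>M ?G) ?G" by (rule measurable_snd)
  have mf: "fst \<in> measurable ?G gauss_vec" by (rule measurable_fst)
  have i2: "integrable ?G (\<lambda>q. (norm (fst q :: real^'d))^2)"
    using integrable_distr_eq[OF mf nm] d2 gvec_sq(1) by metis
  have v2: "(\<integral>q. (norm (fst q :: real^'d))^2 \<partial>?G) = real CARD('d)"
    using integral_distr[OF mf nm] d2 gvec_sq(2)[where 'd='d] by simp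
  show "integrable (init_meas :: (real \<times> (real^'d::finite) \<times> (real^'d^'d)) measure) (\<lambda>p. (norm (fst (snd p)))^2)"
    unfolding init_meas_def using integrable_distr_eq[OF ms nm2] d1 i2 by simp
  show "(\<integral>p. (norm (fst (snd p)))^2 \<partial>(init_meas :: (real \<times> (real^'d::finite) \<times> (real^'d^'d)) measure)) = real CARD('d)"
    unfolding init_meas_def using integral_distr[OF ms nm2] d1 v2 by simp
qed




lemma softmax_jac_mv:
  "(softmax_jac z *v k) $ t = softmax z $ t * (k $ t - (\<Sum>j\<in>UNIV. softmax z $ j * k $ j))"
proof -
  have "(softmax_jac z *v k) $ t = (\<Sum>j\<in>UNIV. (if t = j then softmax z $ t * k $ j else 0)
          - softmax z $ t * (softmax z $ j * k $ j))"
    unfolding matrix_vector_mult_def softmax_jac_def vec_lambda_beta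
    by (intro sum.cong refl) (auto simp: algebra_simps)
  also have "\<dots> = softmax z $ t * k $ t - softmax z $ t * (\<Sum>j\<in>UNIV. softmax z $ j * k $ j)"
    by (simp add: sum_subtractf sum_distrib_left sum.delta sum.delta')
  finally show ?thesis by (simp add: algebra_simps)
qed

lemma Mmat_bound:
  assumes X: "X \<in> token_set"
  shows "norm (Mmat X q W *v U) \<le> norm U"
proof -
  define z where "z = transpose X *v (W *v q)"
  define k where "k = transpose X *v U"
  define y where "y = Mmat X q W *v U"
  have y: "y = X *v (softmax_jac z *v k)"
    unfolding y_def Mmat_def z_def k_def by (simp only: matrix_vector_mul_assoc matrix_mul_assoc)
  have col: "norm (column t X) \<le> 1" for t using X unfolding token_set_def by auto
  have "y \<bullet> y = y \<bullet> (\<Sum>t\<in>UNIV. (softmax_jac z *v k) $ t *\<^sub>R column t X)"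
    by (subst (2) y) (simp add: matrix_mult_sum scalar_mult_eq_scaleR)
  also have "\<dots> = (\<Sum>t\<in>UNIV. softmax z $ t * (y \<bullet> column t X) * (k $ t - (\<Sum>j\<in>UNIV. softmax z $ j * k $ j)))"
    by (simp add: inner_sum_right softmax_jac_mv algebra_simps)
  finally have yy: "y \<bullet> y = \<dots>" .
  have "\<bar>y \<bullet> y\<bar> \<le> norm U * norm y"
    unfolding yy
  proof (rule cov_bound)
    show "0 \<le> softmax z $ t" for t using softmax_pos[of z t] by simp
    show "(\<Sum>t\<in>UNIV. softmax z $ t) = 1" by (rule softmax_sum)
    show "\<bar>k $ t\<bar> \<le> norm U" for t
      unfolding k_def transpose_mv_nth
    proof -
      have "norm (column t X) * norm U \<le> 1 * norm U" by (rule mult_right_mono) (use col in auto)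
      then show "\<bar>column t X \<bullet> U\<bar> \<le> norm U" using Cauchy_Schwarz_ineq2[of "column t X" U] by linarith
    qed
    show "\<bar>y \<bullet> column t X\<bar> \<le> norm y" for t
      using Cauchy_Schwarz_ineq2[of y "column t X"] col[of t]
      by (smt (verit) mult_left_le norm_ge_zero)
  qed
  then have "norm y * norm y \<le> norm U * norm y"
    by (simp add: power2_norm_eq_inner[symmetric] power2_eq_square)
  then have "norm y \<le> norm U"
    by (cases "norm y = 0") (auto simp: mult_le_cancel_right)
  then show ?thesis unfolding y_def .
qed

lemma outer_norm:
  fixes a b :: "real^'d"
  shows "norm (\<chi> i j. a $ i * b $ j) = norm a * norm b"
proof -
  have r: "(\<chi> i j. a $ i * b $ j) $ i = a $ i *\<^sub>R b" for i
    by (simp add: vec_eq_iff)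
  have "(\<chi> i j. a $ i * b $ j) \<bullet> (\<chi> i j. a $ i * b $ j) = (a \<bullet> a) * (b \<bullet> b)"
    unfolding inner_vec_def[of "(\<chi> i j. a $ i * b $ j)"] r
    by (simp add: inner_vec_def[of a a] sum_distrib_left power2_eq_square mult_ac)
  then show ?thesis
    by (simp add: norm_eq_sqrt_inner real_sqrt_mult)
qed

lemma intb:
  fixes f g :: "'a \<Rightarrow> real"
  assumes "integrable M g" "\<And>x. \<bar>f x\<bar> \<le> g x"
  shows "\<bar>integral\<^sup>L M f\<bar> \<le> integral\<^sup>L M g"
proof -
  have "\<bar>integral\<^sup>L M f\<bar> \<le> (\<integral>x. norm (f x) \<partial>M)"
    using integral_norm_bound[of M f] by simp
  also have "\<dots> \<le> integral\<^sup>L M g"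
    by (rule integral_mono') (use assms in \<open>auto intro: order_trans[OF abs_ge_zero]\<close>)
  finally show ?thesis .
qed




lemma part2:
  fixes \<sigma> \<sigma>' :: "real \<Rightarrow> real" and q :: "real^'d"
    and X :: "real^'T^'d"
    and vc :: "real \<times> (real^'d) \<times> (real^'d^'d) \<Rightarrow> real"
    and vu :: "real \<times> (real^'d) \<times> (real^'d^'d) \<Rightarrow> real^'d"
    and vw :: "real \<times> (real^'d) \<times> (real^'d^'d) \<Rightarrow> real^'d^'d"
  assumes bd0: "\<And>x. \<bar>\<sigma> x\<bar> \<le> \<sigma>0"
    and bd1: "\<And>x. \<bar>\<sigma>' x\<bar> \<le> \<sigma>1"
    and qn: "norm q \<le> 1"
    and X: "X \<in> token_set"
    and hc: "\<And>p. \<bar>vc p\<bar> \<le> \<nu>c" and hu: "\<And>p. norm (vu p) \<le> \<nu>u" and hw: "\<And>p. norm (vw p) \<le> \<nu>w"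
  shows "\<bar>ftilde \<sigma> \<sigma>' X q vc vu vw\<bar> \<le> \<sigma>0 * \<nu>c + \<sigma>1 * \<nu>u + \<sigma>1 * sqrt (real CARD('d)) * \<nu>w"
proof -
  let ?M = "init_meas :: (real \<times> (real^'d) \<times> (real^'d^'d)) measure"
  interpret P: prob_space ?M by (rule prob_init)
  have s0: "0 \<le> \<sigma>0" using bd0[of 0] by linarith
  have s1: "0 \<le> \<sigma>1" using bd1[of 0] by linarith
  have c0: "0 \<le> \<nu>c" using hc[of undefined] by linarith
  have u0: "0 \<le> \<nu>u" using hu[of undefined] norm_ge_zero[of "vu undefined"] by linarith
  have w0: "0 \<le> \<nu>w" using hw[of undefined] norm_ge_zero[of "vw undefined"] by linarith
  have I1: "\<bar>\<integral>p. phi_c \<sigma> X q p * vc p \<partial>?M\<bar> \<le> \<sigma>0 * \<nu>c"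
  proof -
    have "\<bar>\<integral>p. phi_c \<sigma> X q p * vc p \<partial>?M\<bar> \<le> (\<integral>p. \<sigma>0 * \<nu>c \<partial>?M)"
    proof (rule intb)
      fix p :: "real \<times> (real^'d) \<times> (real^'d^'d)"
      obtain c U W where p: "p = (c, U, W)" by (cases p) auto
      show "\<bar>phi_c \<sigma> X q p * vc p\<bar> \<le> \<sigma>0 * \<nu>c"
        unfolding p phi_c_def abs_mult by (auto intro!: mult_mono bd0 hc s0)
    qed simp
    then show ?thesis by (simp add: P.prob_space)
  qed
  have I2: "\<bar>\<integral>p. phi_u \<sigma>' X q p \<bullet> vu p \<partial>?M\<bar> \<le> \<sigma>1 * \<nu>u"
  proof -
    have "\<bar>\<integral>p. phi_u \<sigma>' X q p \<bullet> vu p \<partial>?M\<bar> \<le> (\<integral>p. \<sigma>1 * \<nu>u \<partial>?M)"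
    proof (rule intb)
      fix p :: "real \<times> (real^'d) \<times> (real^'d^'d)"
      obtain c U W where p: "p = (c, U, W)" by (cases p) auto
      have "norm (phi_u \<sigma>' X q p) \<le> \<sigma>1"
      proof -
        have "norm (phi_u \<sigma>' X q p) = \<bar>\<sigma>' (U \<bullet> attn X q W)\<bar> * norm (attn X q W)"
          unfolding p phi_u_def by simp
        also have "\<dots> \<le> \<sigma>1 * 1" by (intro mult_mono bd1 norm_attn X s1) auto
        finally show ?thesis by simp
      qed
      then have "norm (phi_u \<sigma>' X q p) * norm (vu p) \<le> \<sigma>1 * \<nu>u"
        by (intro mult_mono hu s1) auto
      then show "\<bar>phi_u \<sigma>' X q p \<bullet> vu p\<bar> \<le> \<sigma>1 * \<nu>u"
        using Cauchy_Schwarz_ineq2[of "phi_u \<sigma>' X q p" "vu p"] by linarith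
    qed simp
    then show ?thesis by (simp add: P.prob_space)
  qed
  define a where "a = sqrt (real CARD('d))"
  have apos: "a > 0" unfolding a_def by simp
  have asq: "a * a = real CARD('d)" unfolding a_def by simp
  define g where "g = (\<lambda>p :: real \<times> (real^'d) \<times> (real^'d^'d).
     \<sigma>1 * \<nu>w * a / 2 + (\<sigma>1 * \<nu>w / (2 * a)) * (norm (fst (snd p)))^2)"
  have gint: "integrable ?M g"
    unfolding g_def using init_sq(1)[where 'd='d] by simp
  have gval: "integral\<^sup>L ?M g = \<sigma>1 * a * \<nu>w"
  proof -
    have "integral\<^sup>L ?M g = \<sigma>1 * \<nu>w * a / 2 + (\<sigma>1 * \<nu>w / (2 * a)) * real CARD('d)"
      unfolding g_def using init_sq[where 'd='d] by (simp add: P.prob_space)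
    also have "\<dots> = \<sigma>1 * a * \<nu>w" using apos by (simp add: asq[symmetric] field_simps)
    finally show ?thesis .
  qed
  have I3: "\<bar>\<integral>p. phi_w \<sigma>' X q p \<bullet> vw p \<partial>?M\<bar> \<le> \<sigma>1 * a * \<nu>w"
  proof -
    have "\<bar>\<integral>p. phi_w \<sigma>' X q p \<bullet> vw p \<partial>?M\<bar> \<le> integral\<^sup>L ?M g"
    proof (rule intb[OF gint])
      fix p :: "real \<times> (real^'d) \<times> (real^'d^'d)"
      obtain c U W where p: "p = (c, U, W)" by (cases p) auto
      have "norm (phi_w \<sigma>' X q p) \<le> \<sigma>1 * norm U"
      proof -
        have "norm (phi_w \<sigma>' X q p) = \<bar>\<sigma>' (U \<bullet> attn X q W)\<bar> * (norm (Mmat X q W *v U) * norm q)"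
          unfolding p phi_w_def by (simp add: outer_norm)
        also have "\<dots> \<le> \<sigma>1 * (norm U * 1)"
          by (intro mult_mono bd1 Mmat_bound X qn s1) auto
        finally show ?thesis by simp
      qed
      then have "norm (phi_w \<sigma>' X q p) * norm (vw p) \<le> \<sigma>1 * norm U * \<nu>w"
        by (intro mult_mono hw) (auto intro: s1 mult_nonneg_nonneg)
      also have "\<dots> \<le> g p"
      proof -
        have "2 * a * norm U \<le> a * a + (norm U)^2"
          using zero_le_power2[of "a - norm U"] by (simp add: power2_eq_square algebra_simps)
        then have "norm U \<le> a / 2 + (norm U)^2 / (2 * a)"
          using apos by (simp add: field_simps)
        then have "\<sigma>1 * \<nu>w * norm U \<le> \<sigma>1 * \<nu>w * (a / 2 + (norm U)^2 / (2 * a))"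
          by (intro mult_left_mono) (use s1 w0 in auto)
        then show ?thesis unfolding g_def p by (simp add: field_simps)
      qed
      finally show "\<bar>phi_w \<sigma>' X q p \<bullet> vw p\<bar> \<le> g p"
        using Cauchy_Schwarz_ineq2[of "phi_w \<sigma>' X q p" "vw p"] by linarith
    qed
    then show ?thesis using gval by simp
  qed
  show ?thesis
    unfolding ftilde_def a_def[symmetric]
    using I1 I2 I3 by (simp add: mult_ac)
qed



theorem lemma6:
  fixes \<sigma> \<sigma>' \<sigma>'' :: "real \<Rightarrow> real"
    and \<sigma>0 \<sigma>1 \<sigma>2 :: real
    and q :: "real^'T^'d \<Rightarrow> real^'d"
    and m :: nat and \<delta> :: real
    and c0 :: "nat \<Rightarrow> real" and U0 :: "nat \<Rightarrow> real^'d" and W0 :: "nat \<Rightarrow> real^'d^'d"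
  assumes deriv1: "\<And>x. (\<sigma> has_real_derivative \<sigma>' x) (at x)"
    and deriv2: "\<And>x. (\<sigma>' has_real_derivative \<sigma>'' x) (at x)"
    and bd0: "\<And>x. \<bar>\<sigma> x\<bar> \<le> \<sigma>0"
    and bd1: "\<And>x. \<bar>\<sigma>' x\<bar> \<le> \<sigma>1"
    and bd2: "\<And>x. \<bar>\<sigma>'' x\<bar> \<le> \<sigma>2"
    and q_bd: "\<And>X. norm (q X) \<le> 1"
    and m_even: "even m" and m_pos: "0 < m"
    and init: "sym_init m c0 U0 W0"
    and \<delta>_pos: "0 < \<delta>" and \<delta>_lt1: "\<delta> < 1"
    and event: "event_U CARD('d) m \<delta> U0"
  shows "(\<forall>\<rho>c \<rho>u \<rho>w c U W. 0 < \<rho>c \<and> 0 < \<rho>u \<and> 0 < \<rho>w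
            \<and> (c, U, W) \<in> Omega m \<rho>c \<rho>u \<rho>w c0 U0 W0 \<longrightarrow>
            (\<forall>X \<in> token_set. \<bar>fnet \<sigma> m X (q X) c U W\<bar>
               \<le> L1 \<sigma>1 CARD('d) m \<delta> \<rho>u * sqrt (\<rho>u^2 + \<rho>w^2) + \<sigma>0 * \<rho>c))
       \<and> (\<forall>\<nu>c \<nu>u \<nu>w vc vu vw. 0 < \<nu>c \<and> 0 < \<nu>u \<and> 0 < \<nu>w
            \<and> vc \<in> borel_measurable init_meas \<and> vu \<in> borel_measurable init_meas
            \<and> vw \<in> borel_measurable init_meas
            \<and> (\<forall>p. \<bar>vc p\<bar> \<le> \<nu>c) \<and> (\<forall>p. norm (vu p) \<le> \<nu>u) \<and> (\<forall>p. norm (vw p) \<le> \<nu>w) \<longrightarrow>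
            (\<forall>X \<in> token_set. \<bar>ftilde \<sigma> \<sigma>' X (q X) vc vu vw\<bar>
               \<le> \<sigma>0 * \<nu>c + \<sigma>1 * \<nu>u + \<sigma>1 * sqrt (real CARD('d)) * \<nu>w))"
    apply (intro conjI allI impI ballI)
  subgoal by (rule part1[OF deriv1 bd0 bd1 q_bd m_even m_pos init event]) auto
  subgoal by (rule part2[OF bd0 bd1 q_bd]) auto
  done

end
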